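(* Let a group $\Gamma$ act on a set $X$, and let $\mathcal S$ be a nonempty self-dual, nested, chain-vanishing collection of nonempty subsets of $X$ which is invariant under the induced action of $\Gamma$ on subsets of $X$. Then $\gamma\cdot[A]_{\mathcal S}:=[\gamma A]_{\mathcal S}$ is a well-defined action of $\Gamma$ by automorphisms on the tree $\mathcal T_{\mathcal S}$ (whose vertex set has cardinality at most $|\mathcal S|$), and the set of stabilizers of the directed edges of $\mathcal T_{\mathcal S}$ is exactly $\{\operatorname{Stab}_\Gamma(A): A\in\mathcal S\}$, where $\operatorname{Stab}_\Gamma(A)$ is the setwise stabilizer. Moreover, if for every $A\in\mathcal S$ there is $\gamma\in\Gamma$ with $\gamma A\ne A$ and $\gamma A\cap A\neq\emptyset$, then no vertex of $\mathcal T_{\mathcal S}$ is fixed by all of $\Gamma$.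
   Context: Fix a nonempty set $X$; $A^c:=X\setminus A$, $A^1:=A$, $A^{-1}:=A^c$. $A\perp B$ means $A\cap B=\emptyset$ and $A\ne B^c$. For a collection $\mathcal S$ of nonempty subsets of $X$ and $A,B\in\mathcal S$, $B$ is $\mathcal S$-maximally orthogonal to $A$ if $B\perp A$ and no $C\in\mathcal S$ satisfies $C\perp A$, $C\supsetneq B$; $[A]_{\mathcal S}:=\{A\}\cup\{B\in\mathcal S:B$ is $\mathcal S$-maximally orthogonal to $A\}$; $A\sim_{\mathcal S}B$ iff $A\in[B]_{\mathcal S}$ (an equivalence relation under the hypotheses). A chain is a strictly monotone (under inclusion) sequence $(A_n)_{n\in\mathbb N}$; a decreasing (resp. increasing) chain is $\mathcal S$-vanishing if no $B\in\mathcal S$ satisfies $B\subseteq A_n$ (resp. $B\cap A_n=\emptyset$) for all $n$; $\mathcal S$ is chain-vanishing if all chains in $\mathcal S$ are $\mathcal S$-vanishing. $A,B$ are nested if some $A^i\cap B^j$ is empty; $\mathcal S$ is nested if its members are pairwise nested; self-dual if closed under complements. $\mathcal T_{\mathcal S}$ is the graph on $\mathcal S/{\sim_{\mathcal S}}$ with an edge between $[A]_{\mathcal S}$ and $[A^c]_{\mathcal S}$ for every $A$ with $A,A^c\in\mathcal S$; its directed edges are $([A]_{\mathcal S},[A^c]_{\mathcal S})$, $A\in\mathcal S$. *)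

theory Defs
  imports "HOL-Algebra.Group_Action"
begin

definition orth :: "'a set \<Rightarrow> 'a set \<Rightarrow> 'a set \<Rightarrow> bool" where
  "orth X A B \<longleftrightarrow> A \<inter> B = {} \<and> A \<noteq> X - B"

definition max_orth :: "'a set \<Rightarrow> 'a set set \<Rightarrow> 'a set \<Rightarrow> 'a set \<Rightarrow> bool" where
  "max_orth X S A B \<longleftrightarrow> B \<in> S \<and> orth X B A \<and> \<not> (\<exists>C\<in>S. orth X C A \<and> B \<subset> C)"

definition cls :: "'a set \<Rightarrow> 'a set set \<Rightarrow> 'a set \<Rightarrow> 'a set set" where
  "cls X S A = {A} \<union> {B \<in> S. max_orth X S A B}"

definition Vert :: "'a set \<Rightarrow> 'a set set \<Rightarrow> 'a set set set" where
  "Vert X S = cls X S ` S"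

definition self_dual :: "'a set \<Rightarrow> 'a set set \<Rightarrow> bool" where
  "self_dual X S \<longleftrightarrow> (\<forall>A\<in>S. X - A \<in> S)"

definition nested :: "'a set \<Rightarrow> 'a set set \<Rightarrow> bool" where
  "nested X S \<longleftrightarrow> (\<forall>A\<in>S. \<forall>B\<in>S.
      A \<inter> B = {} \<or> A \<inter> (X - B) = {} \<or> (X - A) \<inter> B = {} \<or> (X - A) \<inter> (X - B) = {})"

definition incr_chain :: "(nat \<Rightarrow> 'a set) \<Rightarrow> bool" where
  "incr_chain F \<longleftrightarrow> (\<forall>n. F n \<subset> F (Suc n))"

definition decr_chain :: "(nat \<Rightarrow> 'a set) \<Rightarrow> bool" where
  "decr_chain F \<longleftrightarrow> (\<forall>n. F (Suc n) \<subset> F n)"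

definition chain_vanishing :: "'a set set \<Rightarrow> bool" where
  "chain_vanishing S \<longleftrightarrow>
     (\<forall>F. range F \<subseteq> S \<longrightarrow>
        (decr_chain F \<longrightarrow> \<not> (\<exists>B\<in>S. \<forall>n. B \<subseteq> F n)) \<and>
        (incr_chain F \<longrightarrow> \<not> (\<exists>B\<in>S. \<forall>n. B \<inter> F n = {})))"

text \<open>Trees in the sense of Serre: a graph with vertex set V, directed edge set E,
  origin o, terminus t and reversal r.\<close>
definition is_path :: "'e set \<Rightarrow> ('e \<Rightarrow> 'v) \<Rightarrow> ('e \<Rightarrow> 'v) \<Rightarrow> 'e list \<Rightarrow> 'v \<Rightarrow> 'v \<Rightarrow> bool" where
  "is_path E o' t es v w \<longleftrightarrow> es \<noteq> [] \<and> set es \<subseteq> E \<and> o' (hd es) = v \<and> t (last es) = w \<and>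
     (\<forall>i. Suc i < length es \<longrightarrow> t (es ! i) = o' (es ! Suc i))"

definition reduced_path :: "('e \<Rightarrow> 'e) \<Rightarrow> 'e list \<Rightarrow> bool" where
  "reduced_path r es \<longleftrightarrow> (\<forall>i. Suc i < length es \<longrightarrow> es ! Suc i \<noteq> r (es ! i))"

definition serre_tree :: "'v set \<Rightarrow> 'e set \<Rightarrow> ('e \<Rightarrow> 'v) \<Rightarrow> ('e \<Rightarrow> 'v) \<Rightarrow> ('e \<Rightarrow> 'e) \<Rightarrow> bool" where
  "serre_tree V E o' t r \<longleftrightarrow>
     V \<noteq> {} \<and>
     (\<forall>e\<in>E. o' e \<in> V \<and> t e \<in> V \<and> r e \<in> E \<and> r e \<noteq> e \<and> r (r e) = e \<and> o' (r e) = t e) \<and>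
     (\<forall>v\<in>V. \<forall>w\<in>V. v = w \<or> (\<exists>es. is_path E o' t es v w)) \<and>
     \<not> (\<exists>es v. is_path E o' t es v v \<and> reduced_path r es)"

text \<open>The graph T_S: vertices [A]_S, directed edges indexed by A \<in> S, going from
  [A]_S to [X - A]_S, with reversal A \<mapsto> X - A.\<close>
abbreviation T_tree :: "'a set \<Rightarrow> 'a set set \<Rightarrow> bool" where
  "T_tree X S \<equiv> serre_tree (Vert X S) S (cls X S) (\<lambda>A. cls X S (X - A)) (\<lambda>A. X - A)"

definition sact :: "('g \<Rightarrow> 'a \<Rightarrow> 'a) \<Rightarrow> 'g \<Rightarrow> 'a set \<Rightarrow> 'a set" where
  "sact \<phi> g A = \<phi> g ` A"

definition vact :: "('g \<Rightarrow> 'a \<Rightarrow> 'a) \<Rightarrow> 'g \<Rightarrow> 'a set set \<Rightarrow> 'a set set" where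
  "vact \<phi> g v = sact \<phi> g ` v"

definition set_stab :: "('g, 'm) monoid_scheme \<Rightarrow> ('g \<Rightarrow> 'a \<Rightarrow> 'a) \<Rightarrow> 'a set \<Rightarrow> 'g set" where
  "set_stab G \<phi> A = {g \<in> carrier G. sact \<phi> g A = A}"

definition edge_stab :: "('g, 'm) monoid_scheme \<Rightarrow> ('g \<Rightarrow> 'a \<Rightarrow> 'a) \<Rightarrow> 'a set \<Rightarrow> 'a set set \<Rightarrow> 'a set \<Rightarrow> 'g set" where
  "edge_stab G \<phi> X S A = {g \<in> carrier G. vact \<phi> g (cls X S A) = cls X S A \<and>
                                          vact \<phi> g (cls X S (X - A)) = cls X S (X - A)}"

end

theory Submission imports Defs begin

locale NS =
  fixes X :: "'a set" and S :: "'a set set"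
  assumes sub: "\<forall>A\<in>S. A \<noteq> {} \<and> A \<subseteq> X"
    and sd: "self_dual X S" and nest: "nested X S" and cv: "chain_vanishing S"
begin

lemma subX: "A \<in> S \<Longrightarrow> A \<subseteq> X" using sub by blast
lemma ne: "A \<in> S \<Longrightarrow> A \<noteq> {}" using sub by blast
lemma comp: "A \<in> S \<Longrightarrow> X - A \<in> S" using sd unfolding self_dual_def by blast
lemma nestD: "A \<in> S \<Longrightarrow> B \<in> S \<Longrightarrow>
   A \<inter> B = {} \<or> A \<inter> (X - B) = {} \<or> (X - A) \<inter> B = {} \<or> (X - A) \<inter> (X - B) = {}"
  using nest unfolding nested_def by blast

lemma orth_iff: "A \<in> S \<Longrightarrow> B \<in> S \<Longrightarrow> orth X B A \<longleftrightarrow> B \<subset> X - A"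
  using subX[of A] subX[of B] unfolding orth_def by blast

lemma max_orth_sym:
  assumes m: "max_orth X S A B" and A: "A \<in> S"
  shows "max_orth X S B A"
proof -
  have B: "B \<in> S" and o: "B \<subset> X - A" and mx: "\<And>C. C \<in> S \<Longrightarrow> C \<subset> X - A \<Longrightarrow> \<not> B \<subset> C"
    using m A orth_iff unfolding max_orth_def by auto
  have AX: "A \<subseteq> X" "B \<subseteq> X" using A B subX by auto
  have "A \<subset> X - B" using o AX by blast
  moreover have "\<not> (\<exists>C\<in>S. C \<subset> X - B \<and> A \<subset> C)"
  proof
    assume "\<exists>C\<in>S. C \<subset> X - B \<and> A \<subset> C"
    then obtain C where C: "C \<in> S" "C \<subset> X - B" "A \<subset> C" by blast
    have "X - C \<in> S" using comp C by auto
    moreover have "X - C \<subset> X - A" using C AX subX[of C] by blast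
    moreover have "B \<subset> X - C" using C AX subX[of C] by blast
    ultimately show False using mx by blast
  qed
  ultimately show ?thesis using A B orth_iff unfolding max_orth_def by auto
qed

lemma max_orth_trans:
  assumes m1: "max_orth X S B A" and m2: "max_orth X S B D" and B: "B \<in> S" and AD: "A \<noteq> D"
  shows "max_orth X S A D"
proof -
  have A: "A \<in> S" and oA: "A \<subset> X - B" and mxA: "\<And>C. C \<in> S \<Longrightarrow> C \<subset> X - B \<Longrightarrow> \<not> A \<subset> C"
    using m1 B orth_iff unfolding max_orth_def by auto
  have D: "D \<in> S" and oD: "D \<subset> X - B" and mxD: "\<And>C. C \<in> S \<Longrightarrow> C \<subset> X - B \<Longrightarrow> \<not> D \<subset> C"
    using m2 B orth_iff unfolding max_orth_def by auto
  have X: "A \<subseteq> X" "B \<subseteq> X" "D \<subseteq> X"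
    using A B D subX by auto
  have oA1: "A \<subseteq> X - B" using oA by (rule psubset_imp_subset)
  have oD1: "D \<subseteq> X - B" using oD by (rule psubset_imp_subset)
  obtain a where a: "a \<in> A" using ne[OF A] by blast
  obtain b where b: "b \<in> B" using ne[OF B] by blast
  obtain d where d: "d \<in> D" using ne[OF D] by blast
  have bX: "b \<in> X" "b \<notin> A" "b \<notin> D" using b X(2) oA1 oD1 by auto
  have aX: "a \<in> X" "a \<notin> B" using a oA1 by auto
  have dX: "d \<in> X" "d \<notin> B" using d oD1 by auto
  have "D \<subset> X - A"
  proof -
    from nestD[OF A D] show ?thesis
    proof (elim disjE)
      assume h: "A \<inter> D = {}"
      have "D \<subseteq> X - A" using h X(3) by auto
      moreover have "b \<in> X - A" "b \<notin> D" using bX by auto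
      ultimately show ?thesis by auto
    next
      assume "A \<inter> (X - D) = {}" hence "A \<subseteq> D" using X by auto
      hence "A \<subset> D" using AD by auto
      thus ?thesis using mxA[OF D oD] by simp
    next
      assume "(X - A) \<inter> D = {}" hence "D \<subseteq> A" using X by auto
      hence "D \<subset> A" using AD by auto
      thus ?thesis using mxD[OF A oA] by simp
    next
      assume h: "(X - A) \<inter> (X - D) = {}"
      have "b \<in> (X - A) \<inter> (X - D)" using bX by auto
      thus ?thesis using h by simp
    qed
  qed
  moreover have "\<not> (\<exists>C\<in>S. C \<subset> X - A \<and> D \<subset> C)"
  proof
    assume "\<exists>C\<in>S. C \<subset> X - A \<and> D \<subset> C"
    then obtain C where C: "C \<in> S" "C \<subset> X - A" "D \<subset> C" by blast
    have CX: "C \<subseteq> X" using C subX by auto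
    have C1: "C \<subseteq> X - A" "D \<subseteq> C" using C by auto
    have aC: "a \<notin> C" using a C1 by auto
    have dC: "d \<in> C" using d C1 by auto
    from nestD[OF C(1) B] show False
    proof (elim disjE)
      assume "C \<inter> B = {}"
      hence "C \<subseteq> X - B" using CX by auto
      moreover have "a \<in> X - B" using aX by auto
      ultimately have "C \<subset> X - B" using aC by auto
      thus False using mxD[OF C(1)] C(3) by simp
    next
      assume "C \<inter> (X - B) = {}" thus False using dC dX by auto
    next
      assume h: "(X - C) \<inter> B = {}"
      have "X - C \<in> S" using comp C by auto
      moreover have "A \<subseteq> X - C" using C1 X by auto
      moreover have "A \<noteq> X - C"
      proof
        assume "A = X - C" hence "C = X - A" using CX by auto
        thus False using C(2) by simp
      qed
      moreover have "X - C \<subseteq> X - B" using h X by auto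
      moreover have "X - C \<noteq> X - B"
      proof
        assume "X - C = X - B" hence "C = B" using CX X by auto
        thus False using dC dX by simp
      qed
      ultimately show False using mxA[of "X - C"] by auto
    next
      assume h: "(X - C) \<inter> (X - B) = {}"
      have "a \<in> (X - C) \<inter> (X - B)" using aX aC by auto
      thus False using h by simp
    qed
  qed
  ultimately show ?thesis using A D orth_iff unfolding max_orth_def by auto
qed

lemma cls_sub: assumes m: "max_orth X S A B" and A: "A \<in> S"
  shows "cls X S B \<subseteq> cls X S A"
proof
  fix D assume "D \<in> cls X S B"
  hence D: "D = B \<or> max_orth X S B D" unfolding cls_def by auto
  have B: "B \<in> S" using m unfolding max_orth_def by simp
  have mBA: "max_orth X S B A" by (rule max_orth_sym[OF m A])
  show "D \<in> cls X S A"
  proof (cases "D = B")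
    case True thus ?thesis using m B unfolding cls_def by simp
  next
    case False
    hence mD: "max_orth X S B D" using D by simp
    show ?thesis
    proof (cases "D = A")
      case True thus ?thesis unfolding cls_def by simp
    next
      case False
      have "max_orth X S A D" by (rule max_orth_trans[OF mBA mD B]) (use False in simp)
      moreover have "D \<in> S" using mD unfolding max_orth_def by simp
      ultimately show ?thesis unfolding cls_def by simp
    qed
  qed
qed

lemma cls_eq: assumes "B \<in> cls X S A" "A \<in> S" shows "cls X S A = cls X S B"
proof (cases "B = A")
  case False
  hence m: "max_orth X S A B" using assms unfolding cls_def by auto
  have B: "B \<in> S" using m unfolding max_orth_def by auto
  show ?thesis using cls_sub[OF m assms(2)] cls_sub[OF max_orth_sym[OF m assms(2)] B] by blast
qed simp

lemma cover_cls:
  assumes A: "A \<in> S" and D: "D \<in> S" and AD: "A \<subset> D"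
    and cov: "\<And>E. E \<in> S \<Longrightarrow> A \<subset> E \<Longrightarrow> \<not> E \<subset> D"
  shows "cls X S A = cls X S (X - D)"
proof -
  have X: "A \<subseteq> X" "D \<subseteq> X" using A D subX by auto
  have "max_orth X S A (X - D)"
    unfolding max_orth_def
  proof (intro conjI)
    show "X - D \<in> S" using comp D .
    have "X - D \<subseteq> X - A" using AD by auto
    moreover have "X - D \<noteq> X - A"
    proof
      assume "X - D = X - A" hence "D = A" using X by (metis double_diff order_refl)
      thus False using AD by simp
    qed
    ultimately show "orth X (X - D) A" using orth_iff[OF A comp[OF D]] by simp
    show "\<not> (\<exists>C\<in>S. orth X C A \<and> X - D \<subset> C)"
    proof
      assume "\<exists>C\<in>S. orth X C A \<and> X - D \<subset> C"
      then obtain C where C: "C \<in> S" "orth X C A" "X - D \<subset> C" by blast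
      have C2: "C \<subset> X - A" using C orth_iff[OF A C(1)] by simp
      have CX: "C \<subseteq> X" using subX[OF C(1)] .
      have dd: "X - (X - A) = A" "X - (X - D) = D" "X - (X - C) = C" using X CX by (auto simp: double_diff)
      have "X - C \<in> S" using comp C(1) .
      moreover have "A \<subset> X - C"
      proof -
        have "X - (X - A) \<subset> X - C" using C2 CX by auto
        thus ?thesis using dd by simp
      qed
      moreover have "X - C \<subset> D"
      proof -
        have "X - C \<subset> X - (X - D)" using C(3) CX by auto
        thus ?thesis using dd by simp
      qed
      ultimately show False using cov by blast
    qed
  qed
  thus ?thesis using cls_eq[OF _ A, of "X - D"] comp[OF D] unfolding cls_def by simp
qed

lemma K: assumes A: "A \<in> S" and B: "B \<in> S" and e: "cls X S (X - A) = cls X S B" and n: "B \<noteq> X - A"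
  shows "B \<subset> A"
proof -
  have "B \<in> cls X S (X - A)" using e unfolding cls_def by simp
  hence "max_orth X S (X - A) B" using n unfolding cls_def by simp
  hence "B \<subset> X - (X - A)" using orth_iff[OF comp[OF A] B] unfolding max_orth_def by simp
  moreover have "X - (X - A) = A" using subX[OF A] by (auto simp: double_diff)
  ultimately show ?thesis by simp
qed

lemma wf_down: assumes B: "B \<in> S"
  shows "wf {(E', E). E \<in> S \<and> E' \<in> S \<and> B \<subseteq> E' \<and> E' \<subset> E}"
proof (rule ccontr)
  assume "\<not> ?thesis"
  then obtain f where f: "\<And>i. (f (Suc i), f i) \<in> {(E', E). E \<in> S \<and> E' \<in> S \<and> B \<subseteq> E' \<and> E' \<subset> E}"
    unfolding wf_iff_no_infinite_down_chain by blast
  have "decr_chain f" using f unfolding decr_chain_def by auto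
  moreover have "range f \<subseteq> S" using f by blast
  moreover have "\<forall>n. B \<subseteq> f n"
  proof
    fix n show "B \<subseteq> f n" using f[of n] f[of 0] by (cases n) auto
  qed
  ultimately show False using cv B unfolding chain_vanishing_def by blast
qed

lemma wf_up: assumes C: "C \<in> S"
  shows "wf {(E', E). E \<in> S \<and> E' \<in> S \<and> E \<subset> E' \<and> E' \<subseteq> C}"
proof (rule ccontr)
  assume "\<not> ?thesis"
  then obtain f where f: "\<And>i. (f (Suc i), f i) \<in> {(E', E). E \<in> S \<and> E' \<in> S \<and> E \<subset> E' \<and> E' \<subseteq> C}"
    unfolding wf_iff_no_infinite_down_chain by blast
  have "incr_chain f" using f unfolding incr_chain_def by auto
  moreover have "range f \<subseteq> S" using f by blast
  moreover have "\<forall>n. (X - C) \<inter> f n = {}"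
  proof
    fix n show "(X - C) \<inter> f n = {}" using f[of n] f[of 0] by (cases n) auto
  qed
  ultimately show False using cv comp[OF C] unfolding chain_vanishing_def by blast
qed

definition reach where
  "reach v w \<longleftrightarrow> v = w \<or> (\<exists>es. is_path S (cls X S) (\<lambda>A. cls X S (X - A)) es v w)"

lemma reach_edge: "A \<in> S \<Longrightarrow> reach (cls X S A) (cls X S (X - A))"
  unfolding reach_def is_path_def by (rule disjI2, rule exI[of _ "[A]"]) auto

lemma path_append:
  assumes "is_path E o' t xs u v" "is_path E o' t ys v w"
  shows "is_path E o' t (xs @ ys) u w"
proof -
  have a: "xs \<noteq> []" "ys \<noteq> []" "t (last xs) = o' (hd ys)"
    "\<forall>i. Suc i < length xs \<longrightarrow> t (xs ! i) = o' (xs ! Suc i)"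
    "\<forall>i. Suc i < length ys \<longrightarrow> t (ys ! i) = o' (ys ! Suc i)"
    using assms unfolding is_path_def by auto
  have "\<forall>i. Suc i < length (xs @ ys) \<longrightarrow> t ((xs @ ys) ! i) = o' ((xs @ ys) ! Suc i)"
  proof (intro allI impI)
    fix i assume i: "Suc i < length (xs @ ys)"
    consider "Suc i < length xs" | "Suc i = length xs" | "Suc i > length xs" by linarith
    thus "t ((xs @ ys) ! i) = o' ((xs @ ys) ! Suc i)"
    proof cases
      case 1 thus ?thesis using a by (simp add: nth_append)
    next
      case 2
      hence "i = length xs - 1" by simp
      thus ?thesis using a 2 by (simp add: nth_append last_conv_nth hd_conv_nth)
    next
      case 3
      then obtain k where k: "i = length xs + k" by (metis less_Suc_eq_le le_iff_add)
      have "Suc k < length ys" using i k by simp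
      thus ?thesis using a k by (simp add: nth_append)
    qed
  qed
  thus ?thesis using assms unfolding is_path_def by auto
qed

lemma reach_trans: "reach u v \<Longrightarrow> reach v w \<Longrightarrow> reach u w"
  unfolding reach_def using path_append by metis

lemma reach_sub_aux:
  assumes C: "C \<in> S"
  shows "A \<in> S \<longrightarrow> A \<subseteq> C \<longrightarrow> reach (cls X S A) (cls X S C)"
proof (rule wf_induct[OF wf_up[OF C], where P="\<lambda>A. A \<in> S \<longrightarrow> A \<subseteq> C \<longrightarrow> reach (cls X S A) (cls X S C)"])
  fix A
  assume IH: "\<forall>y. (y, A) \<in> {(E', E). E \<in> S \<and> E' \<in> S \<and> E \<subset> E' \<and> E' \<subseteq> C} \<longrightarrow>
            (y \<in> S \<longrightarrow> y \<subseteq> C \<longrightarrow> reach (cls X S y) (cls X S C))"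
  show "A \<in> S \<longrightarrow> A \<subseteq> C \<longrightarrow> reach (cls X S A) (cls X S C)"
  proof (intro impI)
    assume AS: "A \<in> S" and AC0: "A \<subseteq> C"
    show "reach (cls X S A) (cls X S C)"
    proof (cases "A = C")
      case True thus ?thesis unfolding reach_def by simp
    next
      case False
      hence AC: "A \<subset> C" using AC0 by simp
      have "C \<in> {E \<in> S. A \<subset> E \<and> E \<subseteq> C}" using C AC by simp
      then obtain D where D: "D \<in> {E \<in> S. A \<subset> E \<and> E \<subseteq> C}"
        and Dmin: "\<And>E. (E, D) \<in> {(E', E). E \<in> S \<and> E' \<in> S \<and> A \<subseteq> E' \<and> E' \<subset> E} \<Longrightarrow> E \<notin> {E \<in> S. A \<subset> E \<and> E \<subseteq> C}"
        by (rule wfE_min[OF wf_down[OF AS]]) blast+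
      have DS: "D \<in> S" "A \<subset> D" "D \<subseteq> C" using D by auto
      have cov: "\<And>E. E \<in> S \<Longrightarrow> A \<subset> E \<Longrightarrow> \<not> E \<subset> D"
      proof
        fix E assume E: "E \<in> S" "A \<subset> E" "E \<subset> D"
        have "(E, D) \<in> {(E', E). E \<in> S \<and> E' \<in> S \<and> A \<subseteq> E' \<and> E' \<subset> E}" using E DS by auto
        hence "E \<notin> {E \<in> S. A \<subset> E \<and> E \<subseteq> C}" by (rule Dmin)
        moreover have "E \<subseteq> C" using E(3) DS(3) by auto
        ultimately show False using E by simp
      qed
      have e: "cls X S A = cls X S (X - D)" by (rule cover_cls[OF AS DS(1) DS(2) cov])
      have dd: "X - (X - D) = D" using subX[OF DS(1)] by (auto simp: double_diff)
      have r1: "reach (cls X S A) (cls X S D)"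
        using reach_edge[OF comp[OF DS(1)]] e dd by simp
      have "(D, A) \<in> {(E', E). E \<in> S \<and> E' \<in> S \<and> E \<subset> E' \<and> E' \<subseteq> C}" using DS AS by simp
      hence "reach (cls X S D) (cls X S C)" using IH DS by blast
      thus ?thesis by (rule reach_trans[OF r1])
    qed
  qed
qed

lemma reach_all: assumes A: "A \<in> S" and B: "B \<in> S" shows "reach (cls X S A) (cls X S B)"
proof -
  have X: "A \<subseteq> X" "B \<subseteq> X" using A B subX by auto
  have eA: "reach (cls X S A) (cls X S (X - A))" using reach_edge[OF A] .
  have eB: "reach (cls X S (X - B)) (cls X S B)"
    using reach_edge[OF comp[OF B]] X by (simp add: double_diff)
  from nestD[OF A B] show ?thesis
  proof (elim disjE)
    assume "A \<inter> B = {}"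
    hence "A \<subseteq> X - B" using X by auto
    hence "reach (cls X S A) (cls X S (X - B))" using reach_sub_aux[OF comp[OF B]] A by simp
    thus ?thesis by (rule reach_trans[OF _ eB])
  next
    assume "A \<inter> (X - B) = {}" hence "A \<subseteq> B" using X by auto
    thus ?thesis using reach_sub_aux[OF B] A by simp
  next
    assume "(X - A) \<inter> B = {}"
    hence "X - A \<subseteq> X - B" using X by auto
    hence "reach (cls X S (X - A)) (cls X S (X - B))" using reach_sub_aux[OF comp[OF B]] comp[OF A] by simp
    thus ?thesis by (rule reach_trans[OF reach_trans[OF eA] eB])
  next
    assume "(X - A) \<inter> (X - B) = {}"
    hence "X - A \<subseteq> B" using X by auto
    hence "reach (cls X S (X - A)) (cls X S B)" using reach_sub_aux[OF B] comp[OF A] by simp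
    thus ?thesis by (rule reach_trans[OF eA])
  qed
qed

lemma no_cycle:
  assumes p: "is_path S (cls X S) (\<lambda>A. cls X S (X - A)) es v v" and r: "reduced_path (\<lambda>A. X - A) es"
  shows False
proof -
  let ?n = "length es"
  have n: "?n > 0" and inS: "\<And>i. i < ?n \<Longrightarrow> es ! i \<in> S" using p unfolding is_path_def by auto
  have step: "\<And>i. Suc i < ?n \<Longrightarrow> es ! Suc i \<subset> es ! i"
  proof -
    fix i assume i: "Suc i < ?n"
    have "cls X S (X - es ! i) = cls X S (es ! Suc i)" using p i unfolding is_path_def by auto
    moreover have "es ! Suc i \<noteq> X - es ! i" using r i unfolding reduced_path_def by auto
    ultimately show "es ! Suc i \<subset> es ! i" using K inS i by auto
  qed
  have mono: "\<And>k. k < ?n \<Longrightarrow> es ! k \<subseteq> es ! 0"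
  proof -
    fix k show "k < ?n \<Longrightarrow> es ! k \<subseteq> es ! 0"
    proof (induction k)
      case (Suc k)
      have "es ! Suc k \<subset> es ! k" using step Suc.prems by blast
      moreover have "es ! k \<subseteq> es ! 0" using Suc by simp
      ultimately show ?case by blast
    qed simp
  qed
  have l: "last es = es ! (?n - 1)" "hd es = es ! 0" using n by (auto simp: last_conv_nth hd_conv_nth)
  have e: "cls X S (X - es ! (?n - 1)) = cls X S (es ! 0)" using p l unfolding is_path_def by auto
  have S0: "es ! 0 \<in> S" "es ! (?n - 1) \<in> S" using inS n by auto
  have m: "es ! (?n - 1) \<subseteq> es ! 0" using mono n by auto
  show False
  proof (cases "es ! 0 = X - es ! (?n - 1)")
    case True thus False using m ne[OF S0(2)] by blast
  next
    case False thus False using K[OF S0(2) S0(1) e] m by blast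
  qed
qed

lemma tree: assumes "S \<noteq> {}" shows "T_tree X S"
  unfolding serre_tree_def
proof (intro conjI)
  show "Vert X S \<noteq> {}" using assms unfolding Vert_def by auto
  show "\<forall>e\<in>S. cls X S e \<in> Vert X S \<and> cls X S (X - e) \<in> Vert X S \<and> X - e \<in> S \<and> X - e \<noteq> e \<and>
      X - (X - e) = e \<and> cls X S (X - e) = cls X S (X - e)"
  proof -
    have "\<forall>e\<in>S. X - e \<noteq> e" using ne by blast
    thus ?thesis using comp subX unfolding Vert_def by (auto simp: double_diff)
  qed
  show "\<forall>v\<in>Vert X S. \<forall>w\<in>Vert X S. v = w \<or> (\<exists>es. is_path S (cls X S) (\<lambda>A. cls X S (X - A)) es v w)"
    using reach_all unfolding Vert_def reach_def by blast
  show "\<not> (\<exists>es v. is_path S (cls X S) (\<lambda>A. cls X S (X - A)) es v v \<and> reduced_path (\<lambda>A. X - A) es)"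
    using no_cycle by blast
qed

context
  fixes f :: "'a \<Rightarrow> 'a"
  assumes inj: "inj_on f X" and surj: "f ` X = X" and SS: "image f ` S = S"
begin

lemma img_diff: assumes "A \<subseteq> X" shows "f ` (X - A) = X - f ` A"
proof -
  have "f ` (X - A) = f ` X - f ` A" using inj_on_image_set_diff[OF inj, of X A] assms by simp
  thus ?thesis using surj by simp
qed

lemma img_sub: assumes AB: "A \<subseteq> X" "B \<subseteq> X" shows "f ` A \<subseteq> f ` B \<longleftrightarrow> A \<subseteq> B"
proof
  assume h: "f ` A \<subseteq> f ` B"
  show "A \<subseteq> B"
  proof
    fix x assume x: "x \<in> A"
    have "f x \<in> f ` B" using h x by auto
    then obtain y where y: "y \<in> B" "f x = f y" by auto
    have "x \<in> X" "y \<in> X" using x y AB by auto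
    hence "x = y" using inj y(2) unfolding inj_on_def by simp
    thus "x \<in> B" using y by simp
  qed
next
  assume "A \<subseteq> B" thus "f ` A \<subseteq> f ` B" by (rule image_mono)
qed

lemma img_eq: assumes "A \<subseteq> X" "B \<subseteq> X" shows "f ` A = f ` B \<longleftrightarrow> A = B"
  using img_sub[OF assms] img_sub[OF assms(2) assms(1)] by (simp add: set_eq_subset)

lemma img_psub: assumes "A \<subseteq> X" "B \<subseteq> X" shows "f ` A \<subset> f ` B \<longleftrightarrow> A \<subset> B"
  using img_sub[OF assms] img_eq[OF assms] by (simp add: less_le)

lemma img_S_ex: "C \<in> S \<Longrightarrow> \<exists>C'\<in>S. C = f ` C'"
  using SS by (metis imageE)

lemma imgS: "C \<in> S \<Longrightarrow> f ` C \<in> S"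
  using SS by (metis image_eqI)

lemma img_orth: assumes A: "A \<in> S" and C: "C \<in> S"
  shows "orth X (f ` C) (f ` A) \<longleftrightarrow> orth X C A"
proof -
  have AX: "A \<subseteq> X" using A subX by auto
  have "orth X (f ` C) (f ` A) \<longleftrightarrow> f ` C \<subset> X - f ` A" using orth_iff[OF imgS[OF A] imgS[OF C]] .
  also have "\<dots> \<longleftrightarrow> f ` C \<subset> f ` (X - A)" using img_diff[OF AX] by simp
  also have "\<dots> \<longleftrightarrow> C \<subset> X - A" using img_psub[OF subX[OF C] Diff_subset[of X A]] .
  also have "\<dots> \<longleftrightarrow> orth X C A" using orth_iff[OF A C] by simp
  finally show ?thesis .
qed

lemma img_max_orth: assumes A: "A \<in> S" and B: "B \<in> S"
  shows "max_orth X S (f ` A) (f ` B) \<longleftrightarrow> max_orth X S A B"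
proof -
  have AX: "A \<subseteq> X" "B \<subseteq> X" using A B subX by auto
  have ex: "(\<exists>C\<in>S. orth X C (f ` A) \<and> f ` B \<subset> C) \<longleftrightarrow> (\<exists>C\<in>S. orth X C A \<and> B \<subset> C)"
  proof
    assume "\<exists>C\<in>S. orth X C (f ` A) \<and> f ` B \<subset> C"
    then obtain C where C: "C \<in> S" "orth X C (f ` A)" "f ` B \<subset> C" by blast
    obtain C' where C': "C' \<in> S" "C = f ` C'" using img_S_ex[OF C(1)] by blast
    have "orth X C' A" using C(2) img_orth[OF A C'(1)] C'(2) by simp
    moreover have "B \<subset> C'" using C(3) C'(2) img_psub[OF AX(2) subX[OF C'(1)]] by simp
    ultimately show "\<exists>C\<in>S. orth X C A \<and> B \<subset> C" using C'(1) by blast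
  next
    assume "\<exists>C\<in>S. orth X C A \<and> B \<subset> C"
    then obtain C where C: "C \<in> S" "orth X C A" "B \<subset> C" by blast
    have "orth X (f ` C) (f ` A)" using C(2) img_orth[OF A C(1)] by simp
    moreover have "f ` B \<subset> f ` C" using C(3) img_psub[OF AX(2) subX[OF C(1)]] by simp
    ultimately show "\<exists>C\<in>S. orth X C (f ` A) \<and> f ` B \<subset> C" using imgS[OF C(1)] by blast
  qed
  have "max_orth X S (f ` A) (f ` B) \<longleftrightarrow> f ` B \<in> S \<and> orth X (f ` B) (f ` A) \<and> \<not> (\<exists>C\<in>S. orth X C (f ` A) \<and> f ` B \<subset> C)"
    unfolding max_orth_def ..
  also have "\<dots> \<longleftrightarrow> B \<in> S \<and> orth X B A \<and> \<not> (\<exists>C\<in>S. orth X C A \<and> B \<subset> C)"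
    using imgS[OF B] B img_orth[OF A B] ex by simp
  also have "\<dots> \<longleftrightarrow> max_orth X S A B" unfolding max_orth_def ..
  finally show ?thesis .
qed

lemma img_cls: assumes A: "A \<in> S" shows "cls X S (f ` A) = image f ` cls X S A"
proof -
  have "{B \<in> S. max_orth X S (f ` A) B} = image f ` {B \<in> S. max_orth X S A B}"
  proof
    show "{B \<in> S. max_orth X S (f ` A) B} \<subseteq> image f ` {B \<in> S. max_orth X S A B}"
    proof
      fix B assume B: "B \<in> {B \<in> S. max_orth X S (f ` A) B}"
      obtain B' where B': "B' \<in> S" "B = f ` B'" using img_S_ex B by blast
      have "max_orth X S A B'" using B B' img_max_orth[OF A B'(1)] by simp
      thus "B \<in> image f ` {B \<in> S. max_orth X S A B}" using B' by blast
    qed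
  next
    show "image f ` {B \<in> S. max_orth X S A B} \<subseteq> {B \<in> S. max_orth X S (f ` A) B}"
    proof
      fix B assume "B \<in> image f ` {B \<in> S. max_orth X S A B}"
      then obtain B' where B': "B' \<in> S" "max_orth X S A B'" "B = f ` B'" by blast
      thus "B \<in> {B \<in> S. max_orth X S (f ` A) B}" using img_max_orth[OF A B'(1)] imgS[OF B'(1)] by simp
    qed
  qed
  thus ?thesis unfolding cls_def by (simp add: image_Un)
qed

end

end

lemma (in NS) cls_S: "A \<in> S \<Longrightarrow> cls X S A \<subseteq> S"
  unfolding cls_def max_orth_def by auto

lemma act_facts:
  assumes grp: "group G" and act: "group_action G X \<phi>"
  shows "\<And>g A. g \<in> carrier G \<Longrightarrow> A \<subseteq> X \<Longrightarrow> sact \<phi> g A \<subseteq> X"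
    and "\<And>A. A \<subseteq> X \<Longrightarrow> sact \<phi> \<one>\<^bsub>G\<^esub> A = A"
    and "\<And>g h A. g \<in> carrier G \<Longrightarrow> h \<in> carrier G \<Longrightarrow> A \<subseteq> X \<Longrightarrow>
           sact \<phi> (g \<otimes>\<^bsub>G\<^esub> h) A = sact \<phi> g (sact \<phi> h A)"
proof -
  interpret group G by (rule grp)
  interpret group_action G X \<phi> by (rule act)
  show "\<And>g A. g \<in> carrier G \<Longrightarrow> A \<subseteq> X \<Longrightarrow> sact \<phi> g A \<subseteq> X"
    unfolding sact_def using surj_prop by blast
  show "\<And>A. A \<subseteq> X \<Longrightarrow> sact \<phi> \<one>\<^bsub>G\<^esub> A = A"
  proof -
    fix A assume A: "A \<subseteq> X"
    have "\<And>x. x \<in> A \<Longrightarrow> \<phi> \<one>\<^bsub>G\<^esub> x = x" using id_eq_one A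
      by (metis restrict_apply' subsetD)
    thus "sact \<phi> \<one>\<^bsub>G\<^esub> A = A" unfolding sact_def by simp
  qed
  show "\<And>g h A. g \<in> carrier G \<Longrightarrow> h \<in> carrier G \<Longrightarrow> A \<subseteq> X \<Longrightarrow>
           sact \<phi> (g \<otimes>\<^bsub>G\<^esub> h) A = sact \<phi> g (sact \<phi> h A)"
  proof -
    fix g h A assume g: "g \<in> carrier G" and h: "h \<in> carrier G" and A: "A \<subseteq> X"
    have "\<And>x. x \<in> A \<Longrightarrow> \<phi> (g \<otimes>\<^bsub>G\<^esub> h) x = \<phi> g (\<phi> h x)" using composition_rule g h A by blast
    thus "sact \<phi> (g \<otimes>\<^bsub>G\<^esub> h) A = sact \<phi> g (sact \<phi> h A)" unfolding sact_def
      by (simp add: image_image)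
  qed
qed

theorem mainTheorem6:
  fixes G :: "('g, 'm) monoid_scheme" and X :: "'a set" and \<phi> :: "'g \<Rightarrow> 'a \<Rightarrow> 'a"
    and S :: "'a set set"
  assumes "group G"
    and "group_action G X \<phi>"
    and "X \<noteq> {}"
    and "S \<noteq> {}"
    and "\<forall>A\<in>S. A \<noteq> {} \<and> A \<subseteq> X"
    and "self_dual X S"
    and "nested X S"
    and "chain_vanishing S"
    and "\<forall>g\<in>carrier G. \<forall>A\<in>S. sact \<phi> g A \<in> S"
  shows "T_tree X S
    \<and> (\<exists>f. inj_on f (Vert X S) \<and> f ` Vert X S \<subseteq> S)
    \<and> (\<forall>g\<in>carrier G. \<forall>A\<in>S. cls X S (sact \<phi> g A) = vact \<phi> g (cls X S A))
    \<and> (\<forall>v\<in>Vert X S. vact \<phi> \<one>\<^bsub>G\<^esub> v = v)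
    \<and> (\<forall>g\<in>carrier G. \<forall>h\<in>carrier G. \<forall>v\<in>Vert X S.
          vact \<phi> (g \<otimes>\<^bsub>G\<^esub> h) v = vact \<phi> g (vact \<phi> h v))
    \<and> (\<forall>g\<in>carrier G. bij_betw (vact \<phi> g) (Vert X S) (Vert X S)
          \<and> bij_betw (sact \<phi> g) S S
          \<and> (\<forall>A\<in>S. cls X S (sact \<phi> g A) = vact \<phi> g (cls X S A)
                 \<and> cls X S (X - sact \<phi> g A) = vact \<phi> g (cls X S (X - A))
                 \<and> X - sact \<phi> g A = sact \<phi> g (X - A)))
    \<and> {edge_stab G \<phi> X S A | A. A \<in> S} = {set_stab G \<phi> A | A. A \<in> S}
    \<and> ((\<forall>A\<in>S. \<exists>g\<in>carrier G. sact \<phi> g A \<noteq> A \<and> sact \<phi> g A \<inter> A \<noteq> {})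
         \<longrightarrow> \<not> (\<exists>v\<in>Vert X S. \<forall>g\<in>carrier G. vact \<phi> g v = v))"
proof -
  interpret NS X S using assms(5-8) by unfold_locales
  interpret grp: group G by (rule assms(1))
  interpret ga: group_action G X \<phi> by (rule assms(2))
  note af = act_facts[OF assms(1) assms(2)]
  have inv_l: "\<And>g A. g \<in> carrier G \<Longrightarrow> A \<subseteq> X \<Longrightarrow> sact \<phi> (inv\<^bsub>G\<^esub> g) (sact \<phi> g A) = A"
  proof -
    fix g A assume g: "g \<in> carrier G" and A: "A \<subseteq> X"
    have "sact \<phi> (inv\<^bsub>G\<^esub> g) (sact \<phi> g A) = sact \<phi> (inv\<^bsub>G\<^esub> g \<otimes>\<^bsub>G\<^esub> g) A"
      using af(3)[of "inv\<^bsub>G\<^esub> g" g A] g A by simp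
    also have "\<dots> = A" using af(2)[OF A] g by simp
    finally show "sact \<phi> (inv\<^bsub>G\<^esub> g) (sact \<phi> g A) = A" .
  qed
  have inv_r: "\<And>g A. g \<in> carrier G \<Longrightarrow> A \<subseteq> X \<Longrightarrow> sact \<phi> g (sact \<phi> (inv\<^bsub>G\<^esub> g) A) = A"
  proof -
    fix g A assume g: "g \<in> carrier G" and A: "A \<subseteq> X"
    have "sact \<phi> g (sact \<phi> (inv\<^bsub>G\<^esub> g) A) = sact \<phi> (g \<otimes>\<^bsub>G\<^esub> inv\<^bsub>G\<^esub> g) A"
      using af(3)[of g "inv\<^bsub>G\<^esub> g" A] g A by simp
    also have "\<dots> = A" using af(2)[OF A] g by simp
    finally show "sact \<phi> g (sact \<phi> (inv\<^bsub>G\<^esub> g) A) = A" .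
  qed
  have SS: "\<And>g. g \<in> carrier G \<Longrightarrow> image (\<phi> g) ` S = S"
  proof
    fix g assume g: "g \<in> carrier G"
    show "image (\<phi> g) ` S \<subseteq> S" using assms(9) g unfolding sact_def by blast
    show "S \<subseteq> image (\<phi> g) ` S"
    proof
      fix A assume A: "A \<in> S"
      have "sact \<phi> (inv\<^bsub>G\<^esub> g) A \<in> S" using assms(9) g A by auto
      moreover have "A = \<phi> g ` sact \<phi> (inv\<^bsub>G\<^esub> g) A" using inv_r[OF g subX[OF A]] unfolding sact_def by simp
      ultimately show "A \<in> image (\<phi> g) ` S" by blast
    qed
  qed
  have clsg: "\<And>g A. g \<in> carrier G \<Longrightarrow> A \<in> S \<Longrightarrow> cls X S (sact \<phi> g A) = vact \<phi> g (cls X S A)"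
    unfolding vact_def sact_def
    using img_cls[OF ga.inj_prop ga.surj_prop SS] by simp
  have diffg: "\<And>g A. g \<in> carrier G \<Longrightarrow> A \<in> S \<Longrightarrow> X - sact \<phi> g A = sact \<phi> g (X - A)"
    unfolding sact_def using img_diff[OF ga.inj_prop ga.surj_prop SS] subX by simp
  have vX: "\<And>v B. v \<in> Vert X S \<Longrightarrow> B \<in> v \<Longrightarrow> B \<subseteq> X"
  proof -
    fix v B assume v: "v \<in> Vert X S" and B: "B \<in> v"
    then obtain A where A: "A \<in> S" "v = cls X S A" unfolding Vert_def by blast
    have "B \<in> S" using cls_S[OF A(1)] A(2) B by blast
    thus "B \<subseteq> X" by (rule subX)
  qed
  have vone: "\<forall>v\<in>Vert X S. vact \<phi> \<one>\<^bsub>G\<^esub> v = v"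
  proof
    fix v assume v: "v \<in> Vert X S"
    have "sact \<phi> \<one>\<^bsub>G\<^esub> ` v = (\<lambda>B. B) ` v"
      by (rule image_cong) (simp_all add: af(2)[OF vX[OF v]])
    thus "vact \<phi> \<one>\<^bsub>G\<^esub> v = v" unfolding vact_def by simp
  qed
  have vmul: "\<forall>g\<in>carrier G. \<forall>h\<in>carrier G. \<forall>v\<in>Vert X S.
          vact \<phi> (g \<otimes>\<^bsub>G\<^esub> h) v = vact \<phi> g (vact \<phi> h v)"
  proof (intro ballI)
    fix g h v assume g: "g \<in> carrier G" and h: "h \<in> carrier G" and v: "v \<in> Vert X S"
    have "sact \<phi> (g \<otimes>\<^bsub>G\<^esub> h) ` v = (\<lambda>B. sact \<phi> g (sact \<phi> h B)) ` v"
      by (rule image_cong) (simp_all add: af(3)[OF g h vX[OF v]])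
    thus "vact \<phi> (g \<otimes>\<^bsub>G\<^esub> h) v = vact \<phi> g (vact \<phi> h v)" unfolding vact_def by (simp add: image_image)
  qed
  have vinv: "\<And>g v. g \<in> carrier G \<Longrightarrow> v \<in> Vert X S \<Longrightarrow> vact \<phi> (inv\<^bsub>G\<^esub> g) (vact \<phi> g v) = v"
  proof -
    fix g v assume g: "g \<in> carrier G" and v: "v \<in> Vert X S"
    have "vact \<phi> (inv\<^bsub>G\<^esub> g) (vact \<phi> g v) = vact \<phi> (inv\<^bsub>G\<^esub> g \<otimes>\<^bsub>G\<^esub> g) v"
      by (rule vmul[rule_format, OF grp.inv_closed[OF g] g v, symmetric])
    also have "\<dots> = v" using vone g v by simp
    finally show "vact \<phi> (inv\<^bsub>G\<^esub> g) (vact \<phi> g v) = v" .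
  qed
  have vinv': "\<And>g v. g \<in> carrier G \<Longrightarrow> v \<in> Vert X S \<Longrightarrow> vact \<phi> g (vact \<phi> (inv\<^bsub>G\<^esub> g) v) = v"
  proof -
    fix g v assume g: "g \<in> carrier G" and v: "v \<in> Vert X S"
    have "vact \<phi> g (vact \<phi> (inv\<^bsub>G\<^esub> g) v) = vact \<phi> (g \<otimes>\<^bsub>G\<^esub> inv\<^bsub>G\<^esub> g) v"
      by (rule vmul[rule_format, OF g grp.inv_closed[OF g] v, symmetric])
    also have "\<dots> = v" using vone g v by simp
    finally show "vact \<phi> g (vact \<phi> (inv\<^bsub>G\<^esub> g) v) = v" .
  qed
  have vV: "\<And>g v. g \<in> carrier G \<Longrightarrow> v \<in> Vert X S \<Longrightarrow> vact \<phi> g v \<in> Vert X S"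
  proof -
    fix g v assume g: "g \<in> carrier G" and "v \<in> Vert X S"
    then obtain A where A: "A \<in> S" "v = cls X S A" unfolding Vert_def by blast
    have "vact \<phi> g v = cls X S (sact \<phi> g A)" using clsg g A by simp
    thus "vact \<phi> g v \<in> Vert X S" using assms(9) g A unfolding Vert_def by blast
  qed
  have part6: "\<forall>g\<in>carrier G. bij_betw (vact \<phi> g) (Vert X S) (Vert X S)
          \<and> bij_betw (sact \<phi> g) S S
          \<and> (\<forall>A\<in>S. cls X S (sact \<phi> g A) = vact \<phi> g (cls X S A)
                 \<and> cls X S (X - sact \<phi> g A) = vact \<phi> g (cls X S (X - A))
                 \<and> X - sact \<phi> g A = sact \<phi> g (X - A))"
  proof (intro ballI conjI)
    fix g assume g: "g \<in> carrier G"
    have ig: "inv\<^bsub>G\<^esub> g \<in> carrier G" using g by simp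
    show "bij_betw (vact \<phi> g) (Vert X S) (Vert X S)"
      by (rule bij_betw_byWitness[where f'="vact \<phi> (inv\<^bsub>G\<^esub> g)"])
         (use g ig vinv vinv' vV in auto)
    show "bij_betw (sact \<phi> g) S S"
      by (rule bij_betw_byWitness[where f'="sact \<phi> (inv\<^bsub>G\<^esub> g)"])
         (use g ig inv_l inv_r assms(9) subX in auto)
    fix A assume A: "A \<in> S"
    show "cls X S (sact \<phi> g A) = vact \<phi> g (cls X S A)" using clsg g A .
    show "X - sact \<phi> g A = sact \<phi> g (X - A)" using diffg g A .
    show "cls X S (X - sact \<phi> g A) = vact \<phi> g (cls X S (X - A))"
      using diffg[OF g A] clsg[OF g comp[OF A]] by simp
  qed
  have stab: "\<And>A. A \<in> S \<Longrightarrow> edge_stab G \<phi> X S A = set_stab G \<phi> A"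
  proof -
    fix A assume A: "A \<in> S"
    show "edge_stab G \<phi> X S A = set_stab G \<phi> A"
    proof
      show "set_stab G \<phi> A \<subseteq> edge_stab G \<phi> X S A"
      proof
        fix g assume "g \<in> set_stab G \<phi> A"
        hence g: "g \<in> carrier G" "sact \<phi> g A = A" unfolding set_stab_def by auto
        have "vact \<phi> g (cls X S A) = cls X S A" using clsg[OF g(1) A] g by simp
        moreover have "vact \<phi> g (cls X S (X - A)) = cls X S (X - A)"
          using clsg[OF g(1) comp[OF A]] diffg[OF g(1) A] g by simp
        ultimately show "g \<in> edge_stab G \<phi> X S A" unfolding edge_stab_def using g by simp
      qed
      show "edge_stab G \<phi> X S A \<subseteq> set_stab G \<phi> A"
      proof
        fix g assume gs: "g \<in> edge_stab G \<phi> X S A"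
        hence g: "g \<in> carrier G" unfolding edge_stab_def by simp
        have e1: "cls X S (sact \<phi> g A) = cls X S A"
          using gs clsg[OF g A] unfolding edge_stab_def by simp
        have e2: "cls X S (X - sact \<phi> g A) = cls X S (X - A)"
          using gs clsg[OF g comp[OF A]] diffg[OF g A] unfolding edge_stab_def by simp
        have gA: "sact \<phi> g A \<in> S" using assms(9) g A by auto
        have gX: "sact \<phi> g A \<subseteq> X" using gA subX by auto
        have AX: "A \<subseteq> X" using A subX by auto
        have "sact \<phi> g A = A"
        proof (rule ccontr)
          assume ne: "sact \<phi> g A \<noteq> A"
          have "sact \<phi> g A \<in> cls X S A" using e1 unfolding cls_def by auto
          hence "max_orth X S A (sact \<phi> g A)" using ne unfolding cls_def by auto
          hence o1: "sact \<phi> g A \<subset> X - A" using orth_iff[OF A gA] unfolding max_orth_def by auto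
          have "X - sact \<phi> g A \<in> cls X S (X - A)" using e2 unfolding cls_def by auto
          moreover have "X - sact \<phi> g A \<noteq> X - A" using ne gX AX by blast
          ultimately have "max_orth X S (X - A) (X - sact \<phi> g A)" unfolding cls_def by auto
          hence "X - sact \<phi> g A \<subset> X - (X - A)"
            using orth_iff[OF comp[OF A] comp[OF gA]] unfolding max_orth_def by auto
          thus False using o1 gX AX by blast
        qed
        thus "g \<in> set_stab G \<phi> A" unfolding set_stab_def using g by auto
      qed
    qed
  qed
  have part7: "{edge_stab G \<phi> X S A | A. A \<in> S} = {set_stab G \<phi> A | A. A \<in> S}"
    using stab by auto
  have part8: "(\<forall>A\<in>S. \<exists>g\<in>carrier G. sact \<phi> g A \<noteq> A \<and> sact \<phi> g A \<inter> A \<noteq> {})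
         \<longrightarrow> \<not> (\<exists>v\<in>Vert X S. \<forall>g\<in>carrier G. vact \<phi> g v = v)"
  proof (intro impI notI)
    assume h: "\<forall>A\<in>S. \<exists>g\<in>carrier G. sact \<phi> g A \<noteq> A \<and> sact \<phi> g A \<inter> A \<noteq> {}"
    assume "\<exists>v\<in>Vert X S. \<forall>g\<in>carrier G. vact \<phi> g v = v"
    then obtain A where A: "A \<in> S" and fx: "\<forall>g\<in>carrier G. vact \<phi> g (cls X S A) = cls X S A"
      unfolding Vert_def by blast
    obtain g where g: "g \<in> carrier G" "sact \<phi> g A \<noteq> A" "sact \<phi> g A \<inter> A \<noteq> {}" using h A by blast
    have gA: "sact \<phi> g A \<in> S" using assms(9) g A by auto
    have "cls X S (sact \<phi> g A) = cls X S A" using fx clsg g A by auto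
    hence "sact \<phi> g A \<in> cls X S A" unfolding cls_def by auto
    hence "max_orth X S A (sact \<phi> g A)" using g unfolding cls_def by auto
    hence "sact \<phi> g A \<subset> X - A" using orth_iff[OF A gA] unfolding max_orth_def by auto
    thus False using g by blast
  qed
  have part2: "\<exists>f. inj_on f (Vert X S) \<and> f ` Vert X S \<subseteq> S"
    by (rule exI[of _ "inv_into S (cls X S)"]) (auto simp: Vert_def inj_on_inv_into inv_into_into)
  show ?thesis
    apply (intro conjI)
           apply (rule tree[OF assms(4)])
          apply (rule part2)
         apply (use clsg in blast)
        apply (rule vone)
       apply (rule vmul)
      apply (rule part6)
     apply (rule part7)
    by (rule part8)
qed

end
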